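(* For all $n\ge 0$, $|F_n(321,3142,2143)|=\binom{n}{2}+1$.
   Context: A permutation $\pi$ avoids a classical pattern $p\in S_k$ if no subsequence of $\pi$ of length $k$ is order-isomorphic to $p$. A Fishburn permutation is a permutation $\pi=\pi_1\cdots\pi_n$ of $[n]$ for which there are no indices $i<j$ with $\pi_j<\pi_i<\pi_{i+1}$ and $\pi_i=\pi_j+1$. $F_n(\sigma_1,\dots,\sigma_k)$ denotes the set of Fishburn permutations of length $n$ avoiding each of the classical patterns $\sigma_1,\dots,\sigma_k$ (with $F_0$ containing only the empty permutation). *)

theory Defs
  imports Main
begin

text \<open>Permutations of [n] are represented as lists (one-line notation) whose
entries are exactly 1..n, each once. Indices below are 0-based.\<close>

definition is_perm :: "nat \<Rightarrow> nat list \<Rightarrow> bool" where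
  "is_perm n \<pi> \<longleftrightarrow> length \<pi> = n \<and> distinct \<pi> \<and> set \<pi> = {1..n}"

definition contains :: "nat list \<Rightarrow> nat list \<Rightarrow> bool" where
  "contains \<pi> p \<longleftrightarrow> (\<exists>idx. length idx = length p \<and> sorted_wrt (<) idx
      \<and> (\<forall>i<length idx. idx ! i < length \<pi>)
      \<and> (\<forall>i<length p. \<forall>j<length p. (\<pi> ! (idx ! i) < \<pi> ! (idx ! j)) \<longleftrightarrow> (p ! i < p ! j)))"

definition avoids :: "nat list \<Rightarrow> nat list \<Rightarrow> bool" where
  "avoids \<pi> p \<longleftrightarrow> \<not> contains \<pi> p"

definition fishburn :: "nat list \<Rightarrow> bool" where
  "fishburn \<pi> \<longleftrightarrow> \<not> (\<exists>i j. i < j \<and> j < length \<pi> \<and> Suc i < length \<pi>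
      \<and> \<pi> ! j < \<pi> ! i \<and> \<pi> ! i < \<pi> ! (Suc i) \<and> \<pi> ! i = \<pi> ! j + 1)"

definition F :: "nat \<Rightarrow> nat list list \<Rightarrow> nat list set" where
  "F n ps = {\<pi>. is_perm n \<pi> \<and> fishburn \<pi> \<and> (\<forall>p\<in>set ps. avoids \<pi> p)}"

end

theory Submission
  imports Defs
begin


lemma c321:
  assumes "i<j" "j<k" "k<length \<pi>" "\<pi>!j<\<pi>!i" "\<pi>!k<\<pi>!j"
  shows "contains \<pi> [3,2,1]"
  unfolding contains_def
  apply (rule exI[of _ "[i,j,k]"])
  using assms by (auto simp: less_Suc_eq numeral_eq_Suc nth_Cons')

lemma c3142:
  assumes "i<j" "j<k" "k<l" "l<length \<pi>" "\<pi>!j<\<pi>!l" "\<pi>!l<\<pi>!i" "\<pi>!i<\<pi>!k"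
  shows "contains \<pi> [3,1,4,2]"
  unfolding contains_def
  apply (rule exI[of _ "[i,j,k,l]"])
  using assms by (auto simp: less_Suc_eq numeral_eq_Suc nth_Cons')

lemma c2143:
  assumes "i<j" "j<k" "k<l" "l<length \<pi>" "\<pi>!j<\<pi>!i" "\<pi>!i<\<pi>!l" "\<pi>!l<\<pi>!k"
  shows "contains \<pi> [2,1,4,3]"
  unfolding contains_def
  apply (rule exI[of _ "[i,j,k,l]"])
  using assms by (auto simp: less_Suc_eq numeral_eq_Suc nth_Cons')




lemma contains_map:
  assumes "\<forall>x\<in>set \<tau>. \<forall>y\<in>set \<tau>. f x < f y \<longleftrightarrow> x < y"
  shows "contains (map f \<tau>) p = contains \<tau> p"
proof -
  have "(\<forall>i<length idx. idx ! i < length \<tau>) \<Longrightarrow>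
     (\<forall>i<length p. \<forall>j<length p. (map f \<tau> ! (idx ! i) < map f \<tau> ! (idx ! j)) \<longleftrightarrow> (p ! i < p ! j))
   = (\<forall>i<length p. \<forall>j<length p. (\<tau> ! (idx ! i) < \<tau> ! (idx ! j)) \<longleftrightarrow> (p ! i < p ! j))"
    if "length idx = length p" for idx
    using assms that by (auto simp: nth_mem)
  note key = this
  show ?thesis unfolding contains_def length_map
  proof
    assume "\<exists>idx. length idx = length p \<and> sorted_wrt (<) idx \<and> (\<forall>i<length idx. idx ! i < length \<tau>) \<and>
      (\<forall>i<length p. \<forall>j<length p. (map f \<tau> ! (idx ! i) < map f \<tau> ! (idx ! j)) = (p ! i < p ! j))"
    then obtain idx where "length idx = length p \<and> sorted_wrt (<) idx \<and> (\<forall>i<length idx. idx ! i < length \<tau>) \<and>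
      (\<forall>i<length p. \<forall>j<length p. (map f \<tau> ! (idx ! i) < map f \<tau> ! (idx ! j)) = (p ! i < p ! j))" by blast
    with key[of idx] show "\<exists>idx. length idx = length p \<and> sorted_wrt (<) idx \<and> (\<forall>i<length idx. idx ! i < length \<tau>) \<and>
      (\<forall>i<length p. \<forall>j<length p. (\<tau> ! (idx ! i) < \<tau> ! (idx ! j)) = (p ! i < p ! j))" by blast
  next
    assume "\<exists>idx. length idx = length p \<and> sorted_wrt (<) idx \<and> (\<forall>i<length idx. idx ! i < length \<tau>) \<and>
      (\<forall>i<length p. \<forall>j<length p. (\<tau> ! (idx ! i) < \<tau> ! (idx ! j)) = (p ! i < p ! j))"
    then obtain idx where "length idx = length p \<and> sorted_wrt (<) idx \<and> (\<forall>i<length idx. idx ! i < length \<tau>) \<and>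
      (\<forall>i<length p. \<forall>j<length p. (\<tau> ! (idx ! i) < \<tau> ! (idx ! j)) = (p ! i < p ! j))" by blast
    with key[of idx] show "\<exists>idx. length idx = length p \<and> sorted_wrt (<) idx \<and> (\<forall>i<length idx. idx ! i < length \<tau>) \<and>
      (\<forall>i<length p. \<forall>j<length p. (map f \<tau> ! (idx ! i) < map f \<tau> ! (idx ! j)) = (p ! i < p ! j))" by blast
  qed
qed

lemma contains_Cons:
  assumes "contains \<sigma> p" shows "contains (a # \<sigma>) p"
proof -
  obtain idx where h: "length idx = length p" "sorted_wrt (<) idx"
      "\<forall>i<length idx. idx ! i < length \<sigma>"
      "\<forall>i<length p. \<forall>j<length p. (\<sigma> ! (idx ! i) < \<sigma> ! (idx ! j)) \<longleftrightarrow> (p ! i < p ! j)"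
    using assms unfolding contains_def by blast
  show ?thesis unfolding contains_def
    apply (rule exI[of _ "map Suc idx"])
    using h by (auto simp: sorted_wrt_map)
qed

lemma contains_Cons_min:
  assumes "contains (a # \<sigma>) p" "\<forall>x\<in>set \<sigma>. a < x" "k < length p" "p!k < p!0"
  shows "contains \<sigma> p"
proof -
  obtain idx where h: "length idx = length p" "sorted_wrt (<) idx"
      "\<forall>i<length idx. idx ! i < length (a#\<sigma>)"
      "\<forall>i<length p. \<forall>j<length p. ((a#\<sigma>) ! (idx ! i) < (a#\<sigma>) ! (idx ! j)) \<longleftrightarrow> (p ! i < p ! j)"
    using assms unfolding contains_def by blast
  have k0: "k \<noteq> 0" using assms(4) by (metis less_irrefl)
  have pos: "idx ! i > 0" if "i < length idx" for i
  proof (rule ccontr)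
    assume "\<not> idx ! i > 0"
    hence z: "idx ! i = 0" by simp
    have "idx ! 0 \<le> idx ! i" using h(2) that
      by (metis gr0I less_or_eq_imp_le sorted_wrt_nth_less)
    hence z0: "idx ! 0 = 0" using z by simp
    have "idx ! 0 < idx ! k" using h(1,2) assms(3) k0 sorted_wrt_nth_less by fastforce
    hence "idx ! k > 0" by simp
    then obtain q where q: "idx ! k = Suc q" using gr0_implies_Suc by blast
    have "q < length \<sigma>" using h(3) h(1) assms(3) q by fastforce
    hence "a < (a#\<sigma>) ! (idx ! k)" using q assms(2) by (simp add: nth_mem)
    moreover have "((a#\<sigma>) ! (idx ! k) < (a#\<sigma>) ! (idx ! 0))" 
      using h(4) assms(3,4) by (metis gr_zeroI less_nat_zero_code)
    ultimately show False using z0 by simp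
  qed
  show ?thesis unfolding contains_def
  proof (rule exI[of _ "map (\<lambda>x. x - 1) idx"], intro conjI allI impI)
    show "length (map (\<lambda>x. x - 1) idx) = length p" using h by simp
    show "sorted_wrt (<) (map (\<lambda>x. x - 1) idx)"
    proof -
      have "\<forall>i j. i < j \<longrightarrow> j < length idx \<longrightarrow> idx ! i - 1 < idx ! j - 1"
      proof (intro allI impI)
        fix i j assume a: "i < j" "j < length idx"
        have "idx ! i < idx ! j" using h(2) a sorted_wrt_nth_less by blast
        moreover have "idx ! i > 0" using pos a by simp
        ultimately show "idx ! i - 1 < idx ! j - 1" by simp
      qed
      thus ?thesis by (simp add: sorted_wrt_iff_nth_less)
    qed
    fix i assume "i < length (map (\<lambda>x. x - 1) idx)"
    thus "map (\<lambda>x. x - 1) idx ! i < length \<sigma>" using h(3) pos by fastforce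
  next
    fix i j assume ij: "i < length p" "j < length p"
    have e: "(a#\<sigma>) ! (idx ! t) = \<sigma> ! (idx ! t - 1)" if "t < length p" for t
      using pos[of t] that h(1) by (cases "idx ! t") auto
    show "(\<sigma> ! (map (\<lambda>x. x - 1) idx ! i) < \<sigma> ! (map (\<lambda>x. x - 1) idx ! j)) = (p ! i < p ! j)"
      using h(4) ij e h(1) by auto
  qed
qed




abbreviation "P \<equiv> [[3,2,1], [3,1,4,2], [2,1,4,3]] :: nat list list"

lemma fish_Cons: "fishburn (a # \<sigma>) \<Longrightarrow> fishburn \<sigma>"
  unfolding fishburn_def
proof (elim contrapos_nn, elim exE conjE)
  fix i j assume h: "i < j" "j < length \<sigma>" "Suc i < length \<sigma>" "\<sigma> ! j < \<sigma> ! i"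
    "\<sigma> ! i < \<sigma> ! Suc i" "\<sigma> ! i = \<sigma> ! j + 1"
  show "\<exists>i j. i < j \<and> j < length (a # \<sigma>) \<and> Suc i < length (a # \<sigma>) \<and>
      (a # \<sigma>) ! j < (a # \<sigma>) ! i \<and> (a # \<sigma>) ! i < (a # \<sigma>) ! Suc i \<and> (a # \<sigma>) ! i = (a # \<sigma>) ! j + 1"
    by (rule exI[of _ "Suc i"], rule exI[of _ "Suc j"]) (use h in auto)
qed

lemma fish_map_Suc: "fishburn (map Suc \<sigma>) = fishburn \<sigma>"
  unfolding fishburn_def
  apply (intro arg_cong[where f=Not] iffI)
   apply (elim exE conjE; rule_tac x=i in exI; rule_tac x=j in exI; simp)
  apply (elim exE conjE; rule_tac x=i in exI; rule_tac x=j in exI; simp)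
  done

lemma fish_Cons1: assumes "fishburn \<tau>" shows "fishburn (1 # map Suc \<tau>)"
  unfolding fishburn_def
proof
  assume "\<exists>i j. i < j \<and> j < length (1 # map Suc \<tau>) \<and> Suc i < length (1 # map Suc \<tau>) \<and>
      (1 # map Suc \<tau>) ! j < (1 # map Suc \<tau>) ! i \<and> (1 # map Suc \<tau>) ! i < (1 # map Suc \<tau>) ! Suc i \<and>
      (1 # map Suc \<tau>) ! i = (1 # map Suc \<tau>) ! j + 1"
  then obtain i j where h: "i < j" "j < length (1 # map Suc \<tau>)" "Suc i < length (1 # map Suc \<tau>)"
      "(1 # map Suc \<tau>) ! j < (1 # map Suc \<tau>) ! i" "(1 # map Suc \<tau>) ! i < (1 # map Suc \<tau>) ! Suc i"
      "(1 # map Suc \<tau>) ! i = (1 # map Suc \<tau>) ! j + 1" by blast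
  obtain j' where j': "j = Suc j'" using h(1) by (cases j) auto
  show False
  proof (cases i)
    case 0 thus ?thesis using h(6) h(2) j' by simp
  next
    case (Suc i')
    have "fishburn (map Suc \<tau>)" using assms fish_map_Suc by simp
    thus ?thesis unfolding fishburn_def using h Suc j'
      by (metis Suc_less_SucD length_Cons nth_Cons_Suc)
  qed
qed

lemma perm_Cons1: "is_perm (Suc m) (1 # map Suc \<tau>) = is_perm m \<tau>"
proof -
  have "(insert 1 (Suc ` set \<tau>) = {1..Suc m} \<and> 1 \<notin> Suc ` set \<tau>) = (set \<tau> = {1..m})"
  proof
    assume a: "insert 1 (Suc ` set \<tau>) = {1..Suc m} \<and> 1 \<notin> Suc ` set \<tau>"
    show "set \<tau> = {1..m}"
    proof (intro equalityI subsetI)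
      fix x assume x: "x \<in> set \<tau>"
      hence "Suc x \<in> {1..Suc m}" using a by blast
      moreover have "Suc x \<noteq> 1" using a x by (metis imageI)
      ultimately show "x \<in> {1..m}" by auto
    next
      fix x assume x: "x \<in> {1..m}"
      hence "Suc x \<in> insert 1 (Suc ` set \<tau>)" using a by auto
      moreover have "Suc x \<noteq> 1" using x by auto
      ultimately show "x \<in> set \<tau>" by auto
    qed
  next
    assume "set \<tau> = {1..m}" thus "insert 1 (Suc ` set \<tau>) = {1..Suc m} \<and> 1 \<notin> Suc ` set \<tau>"
      by (auto simp: image_iff)
  qed
  thus ?thesis unfolding is_perm_def by (auto simp: distinct_map)
qed




lemma L2: assumes "\<tau> \<in> F m P" shows "1 # map Suc \<tau> \<in> F (Suc m) P"
proof -
  have perm: "is_perm m \<tau>" and fb: "fishburn \<tau>" and av: "\<forall>p\<in>set P. avoids \<tau> p"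
    using assms unfolding F_def by auto
  have pos: "\<forall>x\<in>set (map Suc \<tau>). 1 < x" using perm unfolding is_perm_def by auto
  have "avoids (1 # map Suc \<tau>) p" if p: "p \<in> set P" for p
  proof -
    have k: "1 < length p" "p!1 < p!0" using p by auto
    have "\<not> contains \<tau> p" using av p unfolding avoids_def by auto
    hence "\<not> contains (map Suc \<tau>) p" by (subst contains_map) auto
    thus ?thesis unfolding avoids_def using contains_Cons_min[OF _ pos k] by blast
  qed
  thus ?thesis unfolding F_def using perm_Cons1 perm fish_Cons1 fb by auto
qed

lemma L1: assumes "\<pi> \<in> F (Suc m) P" "\<pi> ! 0 = 1"
  shows "\<exists>\<tau>\<in>F m P. \<pi> = 1 # map Suc \<tau>"
proof -
  have perm: "is_perm (Suc m) \<pi>" and fb: "fishburn \<pi>" and av: "\<forall>p\<in>set P. avoids \<pi> p"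
    using assms unfolding F_def by auto
  obtain \<sigma> where \<sigma>: "\<pi> = 1 # \<sigma>" using perm assms(2) unfolding is_perm_def
    by (cases \<pi>) auto
  have "\<forall>x\<in>set \<sigma>. x \<noteq> 0" using perm \<sigma> unfolding is_perm_def by auto
  hence e: "map Suc (map (\<lambda>x. x - 1) \<sigma>) = \<sigma>" by (induction \<sigma>) auto
  define \<tau> where "\<tau> = map (\<lambda>x. x - 1) \<sigma>"
  have eq: "\<pi> = 1 # map Suc \<tau>" using e \<sigma> \<tau>_def by simp
  have "\<tau> \<in> F m P"
    unfolding F_def
  proof (intro CollectI conjI ballI)
    show "is_perm m \<tau>" using perm eq perm_Cons1 by simp
    show "fishburn \<tau>" using fb eq fish_Cons fish_map_Suc by metis
    fix p assume p: "p \<in> set P"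
    show "avoids \<tau> p"
    proof (unfold avoids_def, rule notI)
      assume "contains \<tau> p"
      hence "contains (map Suc \<tau>) p" by (subst contains_map) auto
      hence "contains \<pi> p" using eq contains_Cons by metis
      thus False using av p unfolding avoids_def by auto
    qed
  qed
  thus ?thesis using eq by blast
qed




definition Q :: "nat \<Rightarrow> nat \<Rightarrow> nat list" where
  "Q m c = c # ([1..<c] @ [Suc c..<Suc (Suc m)])"

lemma no_contains:
  assumes inc: "\<forall>i j. 1 \<le> i \<longrightarrow> i < j \<longrightarrow> j < length \<pi> \<longrightarrow> \<pi>!i < \<pi>!j"
    and st: "s < t" "1 \<le> s" "t < length p" "p!t < p!s"
  shows "\<not> contains \<pi> p"
proof
  assume "contains \<pi> p"
  then obtain idx where h: "length idx = length p" "sorted_wrt (<) idx"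
      "\<forall>i<length idx. idx ! i < length \<pi>"
      "\<forall>i<length p. \<forall>j<length p. (\<pi> ! (idx ! i) < \<pi> ! (idx ! j)) \<longleftrightarrow> (p ! i < p ! j)"
    unfolding contains_def by blast
  have "idx!s < idx!t" using h st sorted_wrt_nth_less by fastforce
  moreover have "idx!0 < idx!s" using h st sorted_wrt_nth_less by fastforce
  moreover have "idx!t < length \<pi>" using h st by auto
  ultimately have "\<pi>!(idx!s) < \<pi>!(idx!t)" using inc by auto
  hence "p!s < p!t" using h st by auto
  thus False using st by simp
qed

lemma sorted_rest: "sorted_wrt (<) ([1..<c] @ [Suc c..<Suc (Suc m)])"
  by (auto simp: sorted_wrt_append)

lemma L4: assumes "2 \<le> c" "c \<le> Suc m" shows "Q m c \<in> F (Suc m) P"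
proof -
  let ?r = "[1..<c] @ [Suc c..<Suc (Suc m)]"
  have inc: "\<forall>i j. 1 \<le> i \<longrightarrow> i < j \<longrightarrow> j < length (Q m c) \<longrightarrow> Q m c!i < Q m c!j"
  proof (intro allI impI)
    fix i j assume a: "1 \<le> i" "i < j" "j < length (Q m c)"
    obtain i' where i': "i = Suc i'" using a by (cases i) auto
    obtain j' where j': "j = Suc j'" using a by (cases j) auto
    have len: "length (Q m c) = Suc (length ?r)" unfolding Q_def by (simp only: length_Cons)
    have b: "j' < length ?r" using a(3) j' len by linarith
    have "?r ! i' < ?r ! j'" using sorted_wrt_nth_less[OF sorted_rest _ b] a(2) i' j' by simp
    thus "Q m c!i < Q m c!j" using i' j' by (simp add: Q_def)
  qed
  have r0: "Q m c ! 1 = 1" using assms by (simp add: Q_def nth_append)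
  have perm: "is_perm (Suc m) (Q m c)"
    unfolding is_perm_def Q_def using assms by auto
  have fb: "fishburn (Q m c)"
    unfolding fishburn_def
  proof
    assume "\<exists>i j. i < j \<and> j < length (Q m c) \<and> Suc i < length (Q m c) \<and> Q m c ! j < Q m c ! i \<and>
        Q m c ! i < Q m c ! Suc i \<and> Q m c ! i = Q m c ! j + 1"
    then obtain i j where h: "i < j" "j < length (Q m c)" "Q m c ! j < Q m c ! i"
        "Q m c ! i < Q m c ! Suc i" by blast
    show False
    proof (cases i)
      case 0 thus ?thesis using h(4) r0 assms by (simp add: Q_def)
    next
      case (Suc i') thus ?thesis using inc h by force
    qed
  qed
  have av: "avoids (Q m c) p" if pP: "p \<in> set P" for p
    unfolding avoids_def
  proof -
    consider "p = [3,2,1]" | "p = [3,1,4,2]" | "p = [2,1,4,3]" using pP by auto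
    then show "\<not> contains (Q m c) p"
    proof cases
      case 1 thus ?thesis using no_contains[OF inc, of 1 2] by simp
    next
      case 2 thus ?thesis using no_contains[OF inc, of 2 3] by simp
    next
      case 3 thus ?thesis using no_contains[OF inc, of 2 3] by simp
    qed
  qed
  show ?thesis unfolding F_def using perm fb av by auto
qed




lemma L3: assumes "\<pi> \<in> F (Suc m) P" "\<pi> ! 0 \<noteq> 1"
  shows "\<exists>c\<in>{2..Suc m}. \<pi> = Q m c"
proof -
  have perm: "is_perm (Suc m) \<pi>" and fb: "fishburn \<pi>" and av: "\<forall>p\<in>set P. avoids \<pi> p"
    using assms unfolding F_def by auto
  have len: "length \<pi> = Suc m" and dist: "distinct \<pi>" and st: "set \<pi> = {1..Suc m}"
    using perm unfolding is_perm_def by auto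
  have vals: "\<pi>!k \<in> {1..Suc m}" if "k < Suc m" for k using st len that nth_mem by metis
  have inj: "k = l" if "k < Suc m" "l < Suc m" "\<pi>!k = \<pi>!l" for k l
    using dist len that nth_eq_iff_index_eq by metis
  have n321: "\<not> contains \<pi> [3,2,1]" and n3142: "\<not> contains \<pi> [3,1,4,2]"
    and n2143: "\<not> contains \<pi> [2,1,4,3]" using av unfolding avoids_def by auto
  define c where "c = \<pi>!0"
  have c2: "2 \<le> c" "c \<le> Suc m" using vals[of 0] assms(2) c_def by auto
  have stepa: "\<pi>!i < \<pi>!j" if "1 \<le> i" "i < j" "j < Suc m" "\<pi>!i < c" "\<pi>!j < c" for i j
  proof (rule ccontr)
    assume "\<not> \<pi>!i < \<pi>!j"
    moreover have "\<pi>!i \<noteq> \<pi>!j" using inj[of i j] that by auto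
    ultimately have "\<pi>!j < \<pi>!i" by simp
    hence "contains \<pi> [3,2,1]" using c321[of 0 i j \<pi>] that len c_def by auto
    thus False using n321 by simp
  qed
  have stepb: "\<pi>!1 < c"
  proof (rule ccontr)
    assume "\<not> \<pi>!1 < c"
    moreover have "\<pi>!1 \<noteq> c" using inj[of 1 0] c_def c2 by auto
    ultimately have gt: "\<pi>!1 > c" by simp
    have "c - 1 \<in> set \<pi>" using st c2 by auto
    then obtain j where j: "j < Suc m" "\<pi>!j = c - 1" using len by (metis in_set_conv_nth)
    have "j \<noteq> 0"
    proof
      assume "j = 0" hence "c = c - 1" using j c_def by simp
      thus False using c2 by simp
    qed
    hence "0 < j \<and> j < length \<pi> \<and> Suc 0 < length \<pi> \<and> \<pi> ! j < \<pi> ! 0 \<and>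
        \<pi> ! 0 < \<pi> ! Suc 0 \<and> \<pi> ! 0 = \<pi> ! j + 1"
      using j gt c2 len c_def by auto
    thus False using fb unfolding fishburn_def by blast
  qed
  have stepc: "\<pi>!1 = 1"
  proof (rule ccontr)
    assume ne: "\<pi>!1 \<noteq> 1"
    have "1 \<in> set \<pi>" using st by auto
    then obtain j where j: "j < Suc m" "\<pi>!j = 1" using len by (metis in_set_conv_nth)
    have "j \<noteq> 0"
    proof
      assume "j = 0" hence "c = 1" using j c_def by simp
      thus False using c2 by simp
    qed
    moreover have "j \<noteq> 1" using j ne by auto
    ultimately have "1 < j" by simp
    moreover have "\<pi>!1 \<ge> 1" using vals[of 1] c2 by auto
    ultimately show False using stepa[of 1 j] j stepb ne c2 by auto
  qed
  have stepd: "\<pi>!i < \<pi>!j" if "1 \<le> i" "i < j" "j < Suc m" for i j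
  proof (cases "i = 1")
    case True
    have "\<pi>!j \<noteq> 1" using inj[of j 1] that True stepc by auto
    thus ?thesis using vals[of j] that True stepc by auto
  next
    case False
    hence i2: "2 \<le> i" using that by auto
    show ?thesis
    proof (rule ccontr)
      assume "\<not> \<pi>!i < \<pi>!j"
      moreover have "\<pi>!i \<noteq> \<pi>!j" using inj[of i j] that by auto
      ultimately have ji: "\<pi>!j < \<pi>!i" by simp
      have ic: "\<pi>!i \<noteq> c" using inj[of i 0] that c_def by auto
      have jc: "\<pi>!j \<noteq> c" using inj[of j 0] that c_def by auto
      have j1: "\<pi>!j \<noteq> 1" using inj[of j 1] that i2 stepc c2 by auto
      have j1': "\<pi>!j > 1" using j1 vals[of j] that by auto
      consider "\<pi>!i < c" | "\<pi>!j > c" | "\<pi>!j < c" "c < \<pi>!i" using ic jc ji by linarith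
      thus False
      proof cases
        case 1 thus ?thesis using stepa[of i j] that ji by auto
      next
        case 2
        have "contains \<pi> [2,1,4,3]"
          using c2143[of 0 1 i j \<pi>] i2 that len c_def stepc c2 2 ji by auto
        thus ?thesis using n2143 by simp
      next
        case 3
        have "contains \<pi> [3,1,4,2]"
          using c3142[of 0 1 i j \<pi>] i2 that len c_def stepc c2 3 j1' by auto
        thus ?thesis using n3142 by simp
      qed
    qed
  qed
  let ?r = "[1..<c] @ [Suc c..<Suc (Suc m)]"
  have s1: "sorted_wrt (<) (tl \<pi>)"
    unfolding sorted_wrt_iff_nth_less using stepd len by (auto simp: nth_tl)
  have hd: "\<pi> = c # tl \<pi>" using len c_def by (cases \<pi>) auto
  have set1: "set (tl \<pi>) = {1..Suc m} - {c}"
  proof -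
    have "set \<pi> = insert c (set (tl \<pi>))" using hd by (metis list.simps(15))
    moreover have "c \<notin> set (tl \<pi>)" using dist hd by (metis distinct.simps(2))
    ultimately show ?thesis using st by auto
  qed
  have set2: "set ?r = {1..Suc m} - {c}" using c2 by auto
  have "tl \<pi> = ?r"
    using s1 sorted_rest[of c m] set1 set2
    by (metis sorted_distinct_set_unique strict_sorted_iff)
  hence "\<pi> = Q m c" using hd unfolding Q_def by simp
  thus ?thesis using c2 by auto
qed




lemma finF: "finite (F m P)"
proof -
  have "F m P \<subseteq> {xs. set xs \<subseteq> {1..m} \<and> length xs = m}"
    unfolding F_def is_perm_def by auto
  thus ?thesis using finite_lists_length_eq[of "{1..m}" m] finite_subset by blast
qed

lemma decomp: "F (Suc m) P = (\<lambda>\<tau>. 1 # map Suc \<tau>) ` F m P \<union> Q m ` {2..Suc m}"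
proof (intro equalityI subsetI)
  fix \<pi> assume a: "\<pi> \<in> F (Suc m) P"
  show "\<pi> \<in> (\<lambda>\<tau>. 1 # map Suc \<tau>) ` F m P \<union> Q m ` {2..Suc m}"
  proof (cases "\<pi>!0 = 1")
    case True thus ?thesis using L1[OF a] by blast
  next
    case False thus ?thesis using L3[OF a] by blast
  qed
next
  fix \<pi> assume "\<pi> \<in> (\<lambda>\<tau>. 1 # map Suc \<tau>) ` F m P \<union> Q m ` {2..Suc m}"
  thus "\<pi> \<in> F (Suc m) P" using L2 L4 by auto
qed



lemma cardF: "card (F (Suc m) P) = card (F m P) + m"
proof -
  have i1: "inj_on (\<lambda>\<tau>. 1 # map Suc \<tau>) (F m P)"
    by (rule inj_onI) (simp add: inj_map_eq_map)
  have i2: "inj_on (Q m) {2..Suc m}" by (rule inj_onI) (simp add: Q_def)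
  have d: "(\<lambda>\<tau>. 1 # map Suc \<tau>) ` F m P \<inter> Q m ` {2..Suc m} = {}"
    by (auto simp: Q_def)
  have "card (F (Suc m) P) = card ((\<lambda>\<tau>. 1 # map Suc \<tau>) ` F m P) + card (Q m ` {2..Suc m})"
    unfolding decomp by (rule card_Un_disjoint) (use finF d in auto)
  also have "\<dots> = card (F m P) + m" using card_image[OF i1] card_image[OF i2] by simp
  finally show ?thesis .
qed

lemma F0: "F 0 P = {[]}"
proof -
  have "avoids [] p" if "p \<in> set P" for p
  proof -
    have "p \<noteq> []" using that by auto
    thus ?thesis unfolding avoids_def contains_def
      by (metis length_0_conv length_greater_0_conv less_nat_zero_code list.size(3))
  qed
  hence "[] \<in> F 0 P" unfolding F_def is_perm_def fishburn_def by simp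
  moreover have "\<pi> = []" if "\<pi> \<in> F 0 P" for \<pi> using that unfolding F_def is_perm_def by simp
  ultimately show ?thesis by blast
qed

theorem mainTheorem10:
  fixes n :: nat
  shows "card (F n [[3,2,1], [3,1,4,2], [2,1,4,3]]) = (n choose 2) + 1"
proof (induction n)
  case 0 thus ?case using F0 by simp
next
  case (Suc m)
  have "Suc m choose 2 = m + (m choose 2)"
    by (simp add: numeral_2_eq_2)
  thus ?case using cardF[of m] Suc by simp
qed


end
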